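(* Let $p$ be a prime, $w\ge1$, $\mu\ge1$ an integer. Let $C\subseteq\mathbb{F}_{p^w}^n$ be a linear $[n,k]$ code with $0<k<n$, with parity-check matrix $H\in\mathbb{F}_{p^w}^{(n-k)\times n}$ (a generator matrix of $C^\perp$) having columns $\mathbf h_1^T,\dots,\mathbf h_n^T$, and let $d^\perp$ be the minimum distance of $C^\perp$. Let $[n]=I_1\sqcup I_2\sqcup I_3$ be a partition with $|I_1|=|I_2|=n-d^\perp+1$. Let $\boldsymbol\tau=(\tau^{(1)},\dots,\tau^{(n)})$, $\tau^{(j)}:\mathbb{F}_{p^w}\to\{0,1\}^\mu$. Then \[ SD(\boldsymbol\tau(C),\boldsymbol\tau(\mathcal U_n))\le\frac12\cdot2^{\mu(n-d^\perp+1)}\sum_{(\ell_j)_{j\in I_3}\in(\{0,1\}^\mu)^{I_3}}\ \max_{\boldsymbol\beta\in\mathbb{F}_{p^w}^{n-k}\setminus\{\mathbf 0\}}\ \prod_{j\in I_3}\left|\widehat{\mathbb 1_{\ell_j}}(\langle\boldsymbol\beta,\mathbf h_j\rangle)\right|. \]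
   Context: $\mathrm{Tr}$ is the trace $\mathbb{F}_{p^w}\to\mathbb{F}_p$ (values in $\{0,\dots,p-1\}$), $\omega_p=e^{2\pi\mathbf i/p}$, $\hat f(\alpha)=p^{-w}\sum_xf(x)\omega_p^{\mathrm{Tr}(\alpha x)}$. For $\ell_j\in\{0,1\}^\mu$, $\mathbb 1_{\ell_j}$ is the indicator of $(\tau^{(j)})^{-1}(\ell_j)$. For $S\subseteq\mathbb{F}_{p^w}^n$, $\boldsymbol\tau(S)$ is the distribution of $(\tau^{(j)}(x_j))_j$ with $\mathbf x$ uniform on $S$; $\mathcal U_n=\mathbb{F}_{p^w}^n$; $SD$ is statistical distance. An empty product equals $1$. *)

theory Defs
  imports "HOL-Analysis.Analysis"
begin

text \<open>Vectors in F^n are functions nat => 'a, extensional on {..<n} (indices 0..n-1).\<close>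

definition vecs :: "nat \<Rightarrow> (nat \<Rightarrow> 'a) set" where
  "vecs n = PiE {..<n} (\<lambda>_. UNIV)"

definition trace_fld :: "nat \<Rightarrow> nat \<Rightarrow> 'a::field \<Rightarrow> 'a" where
  "trace_fld p w x = (\<Sum>i<w. x ^ (p ^ i))"

definition trace_val :: "nat \<Rightarrow> nat \<Rightarrow> 'a::field \<Rightarrow> nat" where
  "trace_val p w x = (THE m. m < p \<and> of_nat m = trace_fld p w x)"

definition omega :: "nat \<Rightarrow> complex" where
  "omega p = exp (2 * pi * \<i> / of_nat p)"

definition fourier :: "nat \<Rightarrow> nat \<Rightarrow> ('a::{field,finite} \<Rightarrow> complex) \<Rightarrow> 'a \<Rightarrow> complex" where
  "fourier p w f \<alpha> = (1 / of_nat (p ^ w)) * (\<Sum>x\<in>UNIV. f x * omega p ^ trace_val p w (\<alpha> * x))"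

definition ind_pre :: "('a \<Rightarrow> bool list) \<Rightarrow> bool list \<Rightarrow> 'a \<Rightarrow> complex" where
  "ind_pre t l x = (if t x = l then 1 else 0)"

text \<open>Codewords of the dual code: row space of the (m x n) matrix H, m = n-k.\<close>
definition dual_word :: "nat \<Rightarrow> (nat \<Rightarrow> nat \<Rightarrow> 'a::field) \<Rightarrow> (nat \<Rightarrow> 'a) \<Rightarrow> nat \<Rightarrow> 'a" where
  "dual_word m H \<beta> j = (\<Sum>i<m. \<beta> i * H i j)"

definition weight :: "nat \<Rightarrow> (nat \<Rightarrow> 'a::zero) \<Rightarrow> nat" where
  "weight n v = card {j\<in>{..<n}. v j \<noteq> 0}"

definition dual_min_dist :: "nat \<Rightarrow> nat \<Rightarrow> (nat \<Rightarrow> nat \<Rightarrow> 'a::field) \<Rightarrow> nat" where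
  "dual_min_dist n m H = Min {weight n (dual_word m H \<beta>) | \<beta>.
      \<beta> \<in> vecs m \<and> (\<exists>j<n. dual_word m H \<beta> j \<noteq> 0)}"

definition code_of :: "nat \<Rightarrow> nat \<Rightarrow> (nat \<Rightarrow> nat \<Rightarrow> 'a::field) \<Rightarrow> (nat \<Rightarrow> 'a) set" where
  "code_of n m H = {x \<in> vecs n. \<forall>i<m. (\<Sum>j<n. H i j * x j) = 0}"

text \<open>Rows of H linearly independent (H generates C^perp of dimension m).\<close>
definition rows_indep :: "nat \<Rightarrow> nat \<Rightarrow> (nat \<Rightarrow> nat \<Rightarrow> 'a::field) \<Rightarrow> bool" where
  "rows_indep n m H \<longleftrightarrow> (\<forall>\<beta>\<in>vecs m. (\<forall>j<n. dual_word m H \<beta> j = 0) \<longrightarrow> (\<forall>i<m. \<beta> i = 0))"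

definition tau_vec :: "(nat \<Rightarrow> 'a \<Rightarrow> bool list) \<Rightarrow> nat \<Rightarrow> (nat \<Rightarrow> 'a) \<Rightarrow> nat \<Rightarrow> bool list" where
  "tau_vec \<tau> n x = (\<lambda>j\<in>{..<n}. \<tau> j (x j))"

definition tau_dist :: "(nat \<Rightarrow> 'a \<Rightarrow> bool list) \<Rightarrow> nat \<Rightarrow> (nat \<Rightarrow> 'a) set \<Rightarrow> (nat \<Rightarrow> bool list) \<Rightarrow> real" where
  "tau_dist \<tau> n S z = real (card {x\<in>S. tau_vec \<tau> n x = z}) / real (card S)"

definition bitstrings :: "nat \<Rightarrow> bool list set" where
  "bitstrings \<mu> = {xs. length xs = \<mu>}"

definition SD_tau :: "(nat \<Rightarrow> 'a \<Rightarrow> bool list) \<Rightarrow> nat \<Rightarrow> nat \<Rightarrow> (nat \<Rightarrow> 'a) set \<Rightarrow> (nat \<Rightarrow> 'a) set \<Rightarrow> real" where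
  "SD_tau \<tau> \<mu> n S T = (1/2) * (\<Sum>z\<in>PiE {..<n} (\<lambda>_. bitstrings \<mu>). \<bar>tau_dist \<tau> n S z - tau_dist \<tau> n T z\<bar>)"

end

theory Submission
  imports Defs "HOL-Number_Theory.Residues" "HOL-Computational_Algebra.Polynomial"
begin

lemma char_eq:
  assumes "prime p" "CARD('a::{field,finite}) = p ^ w"
  shows "CHAR('a) = p"
proof -
  have pos: "CHAR('a) > 0" by (rule finite_imp_CHAR_pos) simp
  have pr: "prime CHAR('a)" using prime_CHAR_semidom[OF pos] .
  have "CHAR('a) dvd p ^ w" using CHAR_dvd_CARD[where 'a='a] assms(2) by simp
  hence "CHAR('a) dvd p" using prime_dvd_power pr by blast
  thus ?thesis using primes_dvd_imp_eq pr assms(1) by blast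
qed

lemma pow_card_same:
  fixes x :: "'a::{field,finite}"
  shows "x ^ CARD('a) = x"
proof (cases "x = 0")
  case False
  have "x * (\<Prod>y\<in>UNIV-{0}. x * y) = x * x ^ (card (UNIV :: 'a set) - 1) * \<Prod>(UNIV-{0})"
    by (simp add: prod.distrib mult_ac)
  also have "x * x ^ (card (UNIV :: 'a set) - 1) = x ^ Suc (card (UNIV :: 'a set) - 1)"
    by (subst power_Suc) auto
  also have "Suc (card (UNIV :: 'a set) - 1) = card (UNIV :: 'a set)"
    using finite_UNIV_card_ge_0[where ?'a = 'a] by simp
  also have "(\<Prod>y\<in>UNIV-{0}. x * y) = (\<Prod>y\<in>UNIV-{0}. y)"
    by (rule prod.reindex_bij_witness[of _ "\<lambda>y. y / x" "\<lambda>y. x * y"]) (use False in auto)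
  finally show ?thesis
    by simp
qed (use finite_UNIV_card_ge_0[where ?'a = 'a] in auto)

locale FF =
  fixes p w :: nat and TY :: "'a::{field,finite} itself"
  assumes prime: "prime p" and w1: "w \<ge> 1" and card: "CARD('a) = p ^ w"
begin

lemma CHAR: "CHAR('a) = p" using char_eq prime card by blast

lemma p2: "p \<ge> 2" using prime prime_ge_2_nat by blast

lemma frob: "((x::'a) + y) ^ (p ^ i) = x ^ (p ^ i) + y ^ (p ^ i)"
  using freshmans_dream'[of "p^i" i x y] CHAR prime by simp

lemma of_nat_eq_iff: "(of_nat a :: 'a) = of_nat b \<longleftrightarrow> a mod p = b mod p"
  using of_nat_eq_iff_cong_CHAR[where 'a='a, of a b] CHAR by (simp add: cong_def)

lemma of_nat_pow: "(of_nat m :: 'a) ^ p = of_nat m"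
proof (induction m)
  case (Suc m)
  have "(of_nat (Suc m) :: 'a) ^ p = (of_nat m + 1) ^ (p ^ 1)" by (simp add: add.commute)
  also have "\<dots> = of_nat m ^ p + 1" using frob[of "of_nat m" 1 1] by simp
  finally show ?case using Suc by simp
qed (use p2 in auto)

lemma fixed_points: "{y::'a. y ^ p = y} = of_nat ` {..<p}"
proof -
  define P :: "'a poly" where "P = Polynomial.monom 1 p + [:0, -1:]"
  have degP: "degree P = p" unfolding P_def using p2
    by (subst degree_add_eq_left) (simp_all add: degree_monom_eq)
  hence "P \<noteq> 0" using p2 by auto
  have roots: "{y. poly P y = 0} = {y::'a. y ^ p = y}"
    by (auto simp: P_def poly_monom)
  have cardle: "card {y::'a. y ^ p = y} \<le> p"
    using card_poly_roots_bound[OF \<open>P \<noteq> 0\<close>] degP roots by simp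
  have inj: "inj_on (of_nat :: nat \<Rightarrow> 'a) {..<p}"
    by (auto simp: inj_on_def of_nat_eq_iff)
  have sub: "of_nat ` {..<p} \<subseteq> {y::'a. y ^ p = y}" using of_nat_pow by auto
  have "card (of_nat ` {..<p} :: 'a set) = p" using card_image[OF inj] by simp
  thus ?thesis using card_subset_eq[OF _ sub] cardle
    by (metis (no_types, lifting) antisym card_mono finite sub)
qed

lemma trace_add: "trace_fld p w ((x::'a) + y) = trace_fld p w x + trace_fld p w y"
  unfolding trace_fld_def by (simp add: frob sum.distrib)

lemma trace_pow: "trace_fld p w (x::'a) ^ p = trace_fld p w x"
proof -
  have "trace_fld p w x ^ p = (\<Sum>i<w. (x ^ p ^ i) ^ p)"
    unfolding trace_fld_def by (subst freshmans_dream_sum[where n=p]) (simp_all add: CHAR prime)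
  also have "\<dots> = (\<Sum>i<w. x ^ p ^ Suc i)"
    by (simp add: power_mult[symmetric] mult.commute)
  also have "\<dots> = (\<Sum>i<Suc w. x ^ p ^ i) - x"
    by (subst sum.lessThan_Suc_shift) simp
  also have "\<dots> = (\<Sum>i<w. x ^ p ^ i) + x ^ p ^ w - x" by simp
  also have "x ^ p ^ w = x" using pow_card_same[of x] card by simp
  finally show ?thesis unfolding trace_fld_def by simp
qed

lemma trace_val: "trace_val p w (x::'a) < p \<and> of_nat (trace_val p w x) = trace_fld p w x"
proof -
  have "trace_fld p w x \<in> of_nat ` {..<p}" using fixed_points trace_pow by blast
  then obtain m where m: "m < p" "of_nat m = trace_fld p w x" by auto
  have uniq: "m' = m" if "m' < p" "of_nat m' = trace_fld p w x" for m'
  proof -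
    have "(of_nat m' :: 'a) = of_nat m" using that(2) m(2) by simp
    hence "m' mod p = m mod p" using of_nat_eq_iff by blast
    thus ?thesis using that(1) m(1) by simp
  qed
  show ?thesis unfolding trace_val_def
  proof (rule theI2[where a=m])
    show "m < p \<and> of_nat m = trace_fld p w x" using m by simp
  next
    fix m' assume "m' < p \<and> (of_nat m' :: 'a) = trace_fld p w x"
    thus "m' = m" using uniq by blast
  next
    fix m' assume "m' < p \<and> (of_nat m' :: 'a) = trace_fld p w x"
    thus "m' < p \<and> (of_nat m' :: 'a) = trace_fld p w x" .
  qed
qed

lemma trace_val_lt: "trace_val p w (x::'a) < p" using trace_val by blast
lemma trace_val_eq: "of_nat (trace_val p w (x::'a)) = trace_fld p w x" using trace_val by blast

lemma trace_nonzero: "\<exists>x::'a. trace_fld p w x \<noteq> 0"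
proof (rule ccontr)
  assume "\<not> ?thesis"
  hence all: "trace_fld p w x = 0" for x :: 'a by blast
  define T :: "'a poly" where "T = (\<Sum>i<w. Polynomial.monom 1 (p ^ i))"
  have polyT: "poly T x = trace_fld p w x" for x
    by (simp add: T_def poly_sum poly_monom trace_fld_def)
  have "Polynomial.coeff T (p ^ (w - 1)) = (\<Sum>i<w. if p ^ i = p ^ (w - 1) then 1 else 0)"
    by (simp add: T_def coeff_sum coeff_monom)
  also have "\<dots> = (\<Sum>i<w. if i = w - 1 then 1 else 0)"
    using p2 by (intro sum.cong) (auto simp: power_inject_exp)
  also have "\<dots> = 1" using w1 by simp
  finally have "T \<noteq> 0" by auto
  have "degree T \<le> p ^ (w - 1)" unfolding T_def
    by (rule degree_sum_le) (use p2 in \<open>auto intro!: order.trans[OF degree_monom_le] power_increasing\<close>)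
  have "card {x::'a. poly T x = 0} \<le> p ^ (w - 1)"
    using card_poly_roots_bound[OF \<open>T \<noteq> 0\<close>] \<open>degree T \<le> _\<close> by simp
  moreover have "{x::'a. poly T x = 0} = UNIV" using polyT all by auto
  moreover have "p ^ (w - 1) < p ^ w" using p2 w1 by (intro power_strict_increasing) auto
  ultimately show False using card by simp
qed


lemma trace_zero: "trace_fld p w (0::'a) = 0"
  unfolding trace_fld_def using p2 by (auto intro!: sum.neutral zero_power)

lemma trace_val_zero: "trace_val p w (0::'a) = 0"
proof -
  have "(of_nat (trace_val p w (0::'a)) :: 'a) = of_nat 0" using trace_val_eq trace_zero by simp
  hence "trace_val p w (0::'a) mod p = 0 mod p" using of_nat_eq_iff by blast
  thus ?thesis using trace_val_lt[of 0] by simp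
qed

lemma trace_val_add: "trace_val p w ((x::'a) + y) mod p = (trace_val p w x + trace_val p w y) mod p"
proof -
  have "(of_nat (trace_val p w (x + y)) :: 'a) = of_nat (trace_val p w x + trace_val p w y)"
    using trace_val_eq trace_add by simp
  thus ?thesis using of_nat_eq_iff by blast
qed

lemma omega_pow: "omega p ^ a = exp (of_nat a * (2 * pi * \<i> / of_nat p))"
  unfolding omega_def by (rule exp_of_nat_mult[symmetric])

lemma omega_p: "omega p ^ p = 1"
proof -
  have "omega p ^ p = exp (2 * complex_of_real pi * \<i>)"
    unfolding omega_pow using p2 by (simp add: field_simps)
  thus ?thesis using exp_two_pi_i by simp
qed

lemma omega_mod: "omega p ^ a = omega p ^ (a mod p)"
proof -
  have "omega p ^ a = omega p ^ (a mod p + p * (a div p))" by simp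
  also have "\<dots> = omega p ^ (a mod p)" by (simp only: power_add power_mult omega_p) simp
  finally show ?thesis .
qed

lemma omega_ne1: assumes "0 < m" "m < p" shows "omega p ^ m \<noteq> 1"
proof
  assume "omega p ^ m = 1"
  hence "exp (of_nat m * (2 * pi * \<i> / of_nat p)) = 1" using omega_pow by simp
  then obtain n :: int where n: "Im (of_nat m * (2 * pi * \<i> / of_nat p)) = of_int (2 * n) * pi"
    using exp_eq_1 by blast
  have "Im (of_nat m * (2 * pi * \<i> / of_nat p)) = 2 * pi * real m / real p"
    using p2 by (simp add: Im_divide power2_eq_square field_simps)
  with n have "2 * pi * real m / real p = 2 * pi * real_of_int n" by (simp add: mult_ac)
  hence "real m = real_of_int n * real p" using p2 by (simp add: field_simps)
  hence "int m = n * int p" by (metis of_int_eq_iff of_int_mult of_int_of_nat_eq)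
  hence "int p dvd int m" by simp
  hence "p dvd m" by simp
  thus False using assms by (auto dest: dvd_imp_le)
qed

lemma norm_omega_pow: "cmod (omega p ^ a) = 1"
  unfolding omega_pow by (simp add: norm_exp_eq_Re)

abbreviation chi :: "'a \<Rightarrow> complex" where "chi x \<equiv> omega p ^ trace_val p w x"

lemma chi_add: "chi (x + y) = chi x * chi y"
proof -
  have "chi (x + y) = omega p ^ ((trace_val p w x + trace_val p w y) mod p)"
    using omega_mod trace_val_add by metis
  also have "\<dots> = chi x * chi y" by (simp add: power_add flip: omega_mod)
  finally show ?thesis .
qed

lemma chi_zero: "chi 0 = 1" by (simp add: trace_val_zero)

lemma chi_neg: "chi (- x) = cnj (chi x)"
proof -
  have "chi (-x) * chi x = 1" by (simp flip: chi_add add: chi_zero)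
  moreover have "cnj (chi x) * chi x = 1"
    using norm_omega_pow[of "trace_val p w x"] complex_norm_square[of "chi x"]
    by (simp add: mult.commute)
  moreover have "chi x \<noteq> 0" using norm_omega_pow[of "trace_val p w x"] by (metis norm_zero zero_neq_one)
  ultimately show ?thesis by (metis mult_right_cancel)
qed

lemma chi_sum: "finite A \<Longrightarrow> chi (\<Sum>i\<in>A. f i) = (\<Prod>i\<in>A. chi (f i))"
  by (induction A rule: finite_induct) (simp_all add: chi_zero chi_add)

lemma chi_nontriv: "\<exists>x0. chi x0 \<noteq> 1"
proof -
  obtain x0 :: 'a where "trace_fld p w x0 \<noteq> 0" using trace_nonzero by blast
  hence "trace_val p w x0 \<noteq> 0" using trace_val_eq[of x0] by (metis of_nat_0)
  hence "chi x0 \<noteq> 1" using omega_ne1 trace_val_lt[of x0] by simp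
  thus ?thesis by blast
qed

lemma sum_chi: "(\<Sum>a\<in>UNIV. chi a) = 0"
proof -
  obtain x0 where x0: "chi x0 \<noteq> 1" using chi_nontriv by blast
  define S where "S = (\<Sum>a\<in>UNIV. chi a)"
  have "S = (\<Sum>a\<in>UNIV. chi (a + x0))" unfolding S_def
    by (rule sum.reindex_bij_witness[of _ "\<lambda>a. a + x0" "\<lambda>a. a - x0"]) auto
  also have "\<dots> = chi x0 * S" unfolding S_def by (simp add: chi_add sum_distrib_left mult.commute)
  finally have "(1 - chi x0) * S = 0" by (simp add: algebra_simps)
  thus ?thesis using x0 unfolding S_def by simp
qed

lemma orth: "(\<Sum>a\<in>UNIV. chi (a * c)) = (if c = 0 then of_nat CARD('a) else 0)"
proof (cases "c = 0")
  case True thus ?thesis by (simp add: chi_zero)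
next
  case False
  have "(\<Sum>a\<in>UNIV. chi (a * c)) = (\<Sum>a\<in>UNIV. chi a)"
    by (rule sum.reindex_bij_witness[of _ "\<lambda>a. a / c" "\<lambda>a. a * c"]) (use False in auto)
  thus ?thesis using sum_chi False by simp
qed

lemma fourier_eq: fixes g :: "'a \<Rightarrow> complex" shows "fourier p w g a = (1 / of_nat CARD('a)) * (\<Sum>x\<in>UNIV. g x * chi (a * x))"
  unfolding fourier_def card by simp

lemma sum_swap3: "(\<Sum>a\<in>A. \<Sum>x\<in>B. \<Sum>y\<in>C. G a x y) = (\<Sum>x\<in>B. \<Sum>y\<in>C. \<Sum>a\<in>A. (G a x y :: complex))"
  apply (rule trans[OF sum.swap])
  apply (rule sum.cong[OF refl])
  apply (rule sum.swap)
  done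

lemma parseval: fixes g :: "'a \<Rightarrow> complex" shows "(\<Sum>a\<in>UNIV. (cmod (fourier p w g a))^2) = (\<Sum>x\<in>UNIV. (cmod (g x))^2) / real CARD('a)"
proof -
  define q where "q = (of_nat CARD('a) :: complex)"
  have q0: "q \<noteq> 0" unfolding q_def by simp
  have "complex_of_real (\<Sum>a\<in>UNIV. (cmod (fourier p w g a))^2)
      = (\<Sum>a\<in>UNIV. fourier p w g a * cnj (fourier p w g a))"
    by (simp only: of_real_sum complex_norm_square)
  also have "\<dots> = (\<Sum>a\<in>UNIV. (1/q)^2 * (\<Sum>x\<in>UNIV. \<Sum>y\<in>UNIV. g x * cnj (g y) * chi (a * ((x::'a) - y))))"
  proof (rule sum.cong[OF refl])
    fix a :: 'a
    have c: "cnj (fourier p w g a) = (1/q) * (\<Sum>y\<in>UNIV. cnj (g y) * chi (- (a * y)))"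
      unfolding fourier_eq q_def
      by (simp only: complex_cnj_mult complex_cnj_divide complex_cnj_one cnj_sum complex_cnj_of_nat chi_neg[symmetric])
    have f: "fourier p w g a = (1/q) * (\<Sum>x\<in>UNIV. g x * chi (a * x))"
      unfolding fourier_eq q_def by (rule refl)
    have e: "chi (a * x) * chi (- (a * y)) = chi (a * ((x::'a) - y))" for x y
      by (simp flip: chi_add add: algebra_simps)
    have "fourier p w g a * cnj (fourier p w g a) = (1/q)^2 * ((\<Sum>x\<in>UNIV. g x * chi (a * x)) * (\<Sum>y\<in>UNIV. cnj (g y) * chi (- (a * y))))"
      apply (subst c) apply (subst f) by (simp only: power2_eq_square mult_ac)
    also have "\<dots> = (1/q)^2 * (\<Sum>x\<in>UNIV. \<Sum>y\<in>UNIV. (g x * chi (a * x)) * (cnj (g y) * chi (- (a * y))))"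
      by (simp only: sum_product)
    also have "\<dots> = (1/q)^2 * (\<Sum>x\<in>UNIV. \<Sum>y\<in>UNIV. g x * cnj (g y) * chi (a * ((x::'a) - y)))"
      by (intro arg_cong[where f="\<lambda>t. (1/q)^2 * t"] sum.cong refl) (simp only: e[symmetric] mult_ac)
    finally show "fourier p w g a * cnj (fourier p w g a) = (1/q)^2 * (\<Sum>x\<in>UNIV. \<Sum>y\<in>UNIV. g x * cnj (g y) * chi (a * ((x::'a) - y)))" .
  qed
  also have "\<dots> = (1/q)^2 * (\<Sum>a\<in>UNIV. \<Sum>x\<in>UNIV. \<Sum>y\<in>UNIV. g x * cnj (g y) * chi (a * ((x::'a) - y)))"
    by (simp only: sum_distrib_left)
  also have "\<dots> = (1/q)^2 * (\<Sum>x\<in>UNIV. \<Sum>y\<in>UNIV. \<Sum>a\<in>UNIV. g x * cnj (g y) * chi (a * ((x::'a) - y)))"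
    by (rule arg_cong[where f="\<lambda>t. (1/q)^2 * t"], rule sum_swap3)
  also have "\<dots> = (1/q)^2 * (\<Sum>x\<in>UNIV. \<Sum>y\<in>UNIV. g x * cnj (g y) * (if x - y = 0 then q else 0))"
    by (simp only: sum_distrib_left[symmetric] orth q_def)
  also have "\<dots> = (1/q)^2 * (\<Sum>x\<in>UNIV. g x * cnj (g x) * q)"
  proof -
    have "(\<Sum>y\<in>UNIV. g x * cnj (g y) * (if x - y = 0 then q else 0)) = g x * cnj (g x) * q" for x
    proof -
      have "(\<Sum>y\<in>UNIV. g x * cnj (g y) * (if x - y = 0 then q else 0)) = (\<Sum>y\<in>UNIV. if y = x then g x * cnj (g y) * q else 0)"
        by (rule sum.cong) auto
      thus ?thesis by simp
    qed
    thus ?thesis by simp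
  qed
  also have "\<dots> = (\<Sum>x\<in>UNIV. g x * cnj (g x)) / q"
  proof -
    have "(\<Sum>x\<in>UNIV. g x * cnj (g x) * q) = q * (\<Sum>x\<in>UNIV. g x * cnj (g x))"
      by (simp only: sum_distrib_left mult.commute)
    thus ?thesis using q0 by (simp add: power2_eq_square)
  qed
  also have "\<dots> = complex_of_real ((\<Sum>x\<in>UNIV. (cmod (g x))^2) / real CARD('a))"
    by (simp only: q_def of_real_divide of_real_sum complex_norm_square of_real_of_nat_eq)
  finally show ?thesis by (rule of_real_eq_iff[THEN iffD1])
qed

end


lemma finite_vecs[simp]: "finite (vecs n :: (nat \<Rightarrow> 'a::finite) set)"
  unfolding vecs_def by (intro finite_PiE) auto

lemma card_vecs: "card (vecs n :: (nat \<Rightarrow> 'a::finite) set) = CARD('a) ^ n"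
  unfolding vecs_def by (simp add: card_PiE)

lemma prod_if_all: "finite A \<Longrightarrow> (\<Prod>i\<in>A. if P i then (c::'b::comm_semiring_1) else 0) = (if (\<forall>i\<in>A. P i) then c ^ card A else 0)"
  by (induction A rule: finite_induct) auto

context FF
begin

lemma sum_chi_lin: "(\<Sum>\<beta>\<in>vecs m. chi (\<Sum>i<m. \<beta> i * s i)) = (if \<forall>i<m. s i = 0 then of_nat CARD('a) ^ m else 0)"
proof -
  have "(\<Sum>\<beta>\<in>vecs m. chi (\<Sum>i<m. \<beta> i * s i)) = (\<Sum>\<beta>\<in>vecs m. \<Prod>i<m. chi (\<beta> i * s i))"
    by (simp add: chi_sum)
  also have "\<dots> = (\<Prod>i<m. \<Sum>b\<in>UNIV. chi (b * s i))"
    unfolding vecs_def by (rule prod_sum_PiE[symmetric]) auto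
  also have "\<dots> = (\<Prod>i<m. if s i = 0 then of_nat CARD('a) else 0)"
    by (simp add: orth)
  also have "\<dots> = (if \<forall>i<m. s i = 0 then of_nat CARD('a) ^ m else 0)"
    by (simp add: prod_if_all)
  finally show ?thesis .
qed

lemma prod_fourier:
  fixes g :: "nat \<Rightarrow> 'a \<Rightarrow> complex"
  shows "(\<Prod>j<n. fourier p w (g j) (y j)) =
    (1 / of_nat CARD('a)) ^ n * (\<Sum>x\<in>vecs n. (\<Prod>j<n. g j (x j)) * chi (\<Sum>j<n. y j * x j))"
proof -
  have "(\<Prod>j<n. fourier p w (g j) (y j)) = (\<Prod>j<n. (1 / of_nat CARD('a)) * (\<Sum>t\<in>UNIV. g j t * chi (y j * t)))"
    by (simp add: fourier_eq)
  also have "\<dots> = (1 / of_nat CARD('a)) ^ n * (\<Prod>j<n. \<Sum>t\<in>UNIV. g j t * chi (y j * t))"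
    by (simp only: prod.distrib prod_constant card_lessThan)
  also have "(\<Prod>j<n. \<Sum>t\<in>UNIV. g j t * chi (y j * t)) = (\<Sum>x\<in>vecs n. \<Prod>j<n. g j (x j) * chi (y j * x j))"
    unfolding vecs_def by (rule prod_sum_PiE) auto
  also have "\<dots> = (\<Sum>x\<in>vecs n. (\<Prod>j<n. g j (x j)) * chi (\<Sum>j<n. y j * x j))"
    by (simp add: prod.distrib chi_sum)
  finally show ?thesis .
qed

lemma poisson:
  fixes g :: "nat \<Rightarrow> 'a \<Rightarrow> complex" and H :: "nat \<Rightarrow> nat \<Rightarrow> 'a"
  shows "(\<Sum>\<beta>\<in>vecs m. \<Prod>j<n. fourier p w (g j) (dual_word m H \<beta> j)) =
    (of_nat CARD('a) ^ m / of_nat CARD('a) ^ n) * (\<Sum>x\<in>code_of n m H. \<Prod>j<n. g j (x j))"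
proof -
  define q where "q = (of_nat CARD('a) :: complex)"
  have lin: "(\<Sum>j<n. dual_word m H \<beta> j * x j) = (\<Sum>i<m. \<beta> i * (\<Sum>j<n. H i j * x j))" for \<beta> x
    unfolding dual_word_def by (simp add: sum_distrib_left sum_distrib_right mult_ac sum.swap[of _ "{..<n}"])
  have "(\<Sum>\<beta>\<in>vecs m. \<Prod>j<n. fourier p w (g j) (dual_word m H \<beta> j))
      = (\<Sum>\<beta>\<in>vecs m. (1/q) ^ n * (\<Sum>x\<in>vecs n. (\<Prod>j<n. g j (x j)) * chi (\<Sum>i<m. \<beta> i * (\<Sum>j<n. H i j * x j))))"
    unfolding prod_fourier lin q_def ..
  also have "\<dots> = (1/q) ^ n * (\<Sum>x\<in>vecs n. (\<Prod>j<n. g j (x j)) * (\<Sum>\<beta>\<in>vecs m. chi (\<Sum>i<m. \<beta> i * (\<Sum>j<n. H i j * x j))))"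
    by (simp add: sum_distrib_left sum.swap[of _ "vecs m"])
  also have "\<dots> = (1/q) ^ n * (\<Sum>x\<in>vecs n. (\<Prod>j<n. g j (x j)) * (if \<forall>i<m. (\<Sum>j<n. H i j * x j) = 0 then q ^ m else 0))"
    by (simp only: sum_chi_lin q_def)
  also have "\<dots> = (1/q) ^ n * (\<Sum>x\<in>vecs n. if \<forall>i<m. (\<Sum>j<n. H i j * x j) = 0 then q ^ m * (\<Prod>j<n. g j (x j)) else 0)"
    by (intro arg_cong[where f="\<lambda>t. (1/q)^n * t"] sum.cong) auto
  also have "\<dots> = (1/q) ^ n * (\<Sum>x\<in>code_of n m H. q ^ m * (\<Prod>j<n. g j (x j)))"
    unfolding code_of_def by (simp add: sum.inter_filter)
  also have "\<dots> = (q ^ m / q ^ n) * (\<Sum>x\<in>code_of n m H. \<Prod>j<n. g j (x j))"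
    by (simp add: sum_distrib_left[symmetric] field_simps)
  finally show ?thesis unfolding q_def .
qed


definition zv :: "nat \<Rightarrow> nat \<Rightarrow> 'a" where "zv m = (\<lambda>i\<in>{..<m}. 0)"

lemma zv_vecs: "zv m \<in> vecs m" unfolding zv_def vecs_def by auto

lemma dw_zv: fixes H :: "nat \<Rightarrow> nat \<Rightarrow> 'a" shows "dual_word m H (zv m) j = 0" unfolding dual_word_def zv_def by simp

lemma vecs_eq_zv: fixes \<beta> :: "nat \<Rightarrow> 'a" shows "\<beta> \<in> vecs m \<Longrightarrow> (\<beta> = zv m) \<longleftrightarrow> (\<forall>i<m. \<beta> i = 0)"
  unfolding zv_def vecs_def by (auto simp: PiE_def extensional_def fun_eq_iff)

lemma dw_zero_iff:
  fixes H :: "nat \<Rightarrow> nat \<Rightarrow> 'a"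
  assumes "rows_indep n m H" "\<beta> \<in> vecs m"
  shows "(\<forall>j<n. dual_word m H \<beta> j = 0) \<longleftrightarrow> \<beta> = zv m"
  using assms vecs_eq_zv[OF assms(2)] dw_zv[of m H] unfolding rows_indep_def by auto

lemma fourier_one: fixes a :: 'a shows "fourier p w (\<lambda>_. 1) a = (if a = 0 then 1 else 0)"
proof -
  have "(\<Sum>x\<in>UNIV. chi (a * x)) = (\<Sum>x\<in>UNIV. chi (x * a))" by (simp add: mult.commute)
  thus ?thesis unfolding fourier_eq by (simp add: orth)
qed

lemma card_code:
  fixes H :: "nat \<Rightarrow> nat \<Rightarrow> 'a"
  assumes "rows_indep n m H"
  shows "(of_nat (card (code_of n m H)) :: complex) = of_nat CARD('a) ^ n / of_nat CARD('a) ^ m"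
proof -
  have "(\<Sum>\<beta>\<in>vecs m. \<Prod>j<n. fourier p w (\<lambda>_. 1) (dual_word m H \<beta> j)) = (\<Sum>\<beta>\<in>vecs m. if \<beta> = zv m then 1 else 0)"
  proof (rule sum.cong[OF refl])
    fix \<beta> :: "nat \<Rightarrow> 'a" assume b: "\<beta> \<in> vecs m"
    have "(\<Prod>j<n. fourier p w (\<lambda>_. 1) (dual_word m H \<beta> j)) = (\<Prod>j<n. if dual_word m H \<beta> j = 0 then (1::complex) else 0)"
      by (simp only: fourier_one)
    also have "\<dots> = (if \<forall>j<n. dual_word m H \<beta> j = 0 then 1 else 0)"
      by (simp add: prod_if_all)
    finally show "(\<Prod>j<n. fourier p w (\<lambda>_. 1) (dual_word m H \<beta> j)) = (if \<beta> = zv m then 1 else 0)"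
      using dw_zero_iff[OF assms b] by simp
  qed
  also have "\<dots> = 1" using zv_vecs[of m] by simp
  finally have "1 = (of_nat CARD('a) ^ m / of_nat CARD('a) ^ n) * (\<Sum>x\<in>code_of n m H. \<Prod>j<n. (1::complex))"
    using poisson[where g="\<lambda>_ _. 1" and m=m and n=n and H=H] by simp
  thus ?thesis by (simp add: field_simps)
qed

lemma count_prod:
  fixes \<tau> :: "nat \<Rightarrow> 'a \<Rightarrow> bool list" and S :: "(nat \<Rightarrow> 'a) set"
  assumes "S \<subseteq> vecs n" "z \<in> extensional {..<n}"
  shows "(of_nat (card {x\<in>S. tau_vec \<tau> n x = z}) :: complex) = (\<Sum>x\<in>S. \<Prod>j<n. ind_pre (\<tau> j) (z j) (x j))"
proof -
  have fin: "finite S" using assms(1) finite_subset finite_vecs by blast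
  have eq: "(\<Prod>j<n. ind_pre (\<tau> j) (z j) (x j)) = (if tau_vec \<tau> n x = z then 1 else 0)" for x
  proof -
    have "(tau_vec \<tau> n x = z) \<longleftrightarrow> (\<forall>j<n. \<tau> j (x j) = z j)"
      using assms(2) unfolding tau_vec_def by (auto simp: fun_eq_iff extensional_def)
    moreover have "(\<Prod>j<n. ind_pre (\<tau> j) (z j) (x j)) = (if \<forall>j<n. \<tau> j (x j) = z j then 1 else 0)"
      unfolding ind_pre_def by (simp add: prod_if_all)
    ultimately show ?thesis by simp
  qed
  have "(of_nat (card {x\<in>S. tau_vec \<tau> n x = z}) :: complex) = (\<Sum>x\<in>{x\<in>S. tau_vec \<tau> n x = z}. 1)"
    by simp
  also have "\<dots> = (\<Sum>x\<in>S. if tau_vec \<tau> n x = z then 1 else 0)"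
    by (rule sum.inter_filter[OF fin])
  finally show ?thesis by (simp add: eq)
qed

lemma code_sub: "code_of n m H \<subseteq> vecs n" unfolding code_of_def by auto

lemma tau_dist_code:
  fixes \<tau> :: "nat \<Rightarrow> 'a \<Rightarrow> bool list" and H :: "nat \<Rightarrow> nat \<Rightarrow> 'a"
  assumes "rows_indep n m H" "z \<in> extensional {..<n}"
  shows "complex_of_real (tau_dist \<tau> n (code_of n m H) z) =
    (\<Sum>\<beta>\<in>vecs m. \<Prod>j<n. fourier p w (\<lambda>t. ind_pre (\<tau> j) (z j) t) (dual_word m H \<beta> j))"
proof -
  define q where "q = (of_nat CARD('a) :: complex)"
  have q0: "q \<noteq> 0" unfolding q_def by simp
  have c: "of_nat (card (code_of n m H)) = q ^ n / q ^ m" using card_code[OF assms(1)] q_def by simp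
  have "complex_of_real (tau_dist \<tau> n (code_of n m H) z) =
     of_nat (card {x\<in>code_of n m H. tau_vec \<tau> n x = z}) / of_nat (card (code_of n m H))"
    unfolding tau_dist_def by simp
  also have "\<dots> = (\<Sum>x\<in>code_of n m H. \<Prod>j<n. ind_pre (\<tau> j) (z j) (x j)) / (q ^ n / q ^ m)"
    using count_prod[OF code_sub assms(2)] c by simp
  also have "(\<Sum>x\<in>code_of n m H. \<Prod>j<n. ind_pre (\<tau> j) (z j) (x j)) =
     (q ^ n / q ^ m) * (\<Sum>\<beta>\<in>vecs m. \<Prod>j<n. fourier p w (\<lambda>t. ind_pre (\<tau> j) (z j) t) (dual_word m H \<beta> j))"
    using poisson[where g="\<lambda>j t. ind_pre (\<tau> j) (z j) t" and m=m and n=n and H=H] q0 unfolding q_def by (simp add: field_simps)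
  finally show ?thesis using q0 by simp
qed

lemma vecs0: "vecs 0 = {\<lambda>_. undefined}" unfolding vecs_def by simp

lemma tau_dist_unif:
  fixes \<tau> :: "nat \<Rightarrow> 'a \<Rightarrow> bool list"
  assumes "z \<in> extensional {..<n}"
  shows "complex_of_real (tau_dist \<tau> n (vecs n) z) =
    (\<Prod>j<n. fourier p w (\<lambda>t. ind_pre (\<tau> j) (z j) t) 0)"
proof -
  define q where "q = (of_nat CARD('a) :: complex)"
  have q0: "q \<noteq> 0" unfolding q_def by simp
  have C0: "code_of n 0 H = vecs n" for H :: "nat \<Rightarrow> nat \<Rightarrow> 'a" unfolding code_of_def by simp
  have dw0: "dual_word 0 H \<beta> j = 0" for H :: "nat \<Rightarrow> nat \<Rightarrow> 'a" and \<beta> j unfolding dual_word_def by simp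
  have P: "(\<Prod>j<n. fourier p w (\<lambda>t. ind_pre (\<tau> j) (z j) t) 0) = (1 / q ^ n) * (\<Sum>x\<in>vecs n. \<Prod>j<n. ind_pre (\<tau> j) (z j) (x j))"
    using poisson[where g="\<lambda>j t. ind_pre (\<tau> j) (z j) t" and m=0 and n=n and H="\<lambda>_ _. 0"] unfolding C0 dw0 vecs0 q_def by simp
  have "complex_of_real (tau_dist \<tau> n (vecs n) z) =
     of_nat (card {x\<in>vecs n. tau_vec \<tau> n x = z}) / of_nat (card (vecs n :: (nat \<Rightarrow> 'a) set))"
    unfolding tau_dist_def by simp
  also have "\<dots> = (\<Sum>x\<in>vecs n. \<Prod>j<n. ind_pre (\<tau> j) (z j) (x j)) / q ^ n"
    using count_prod[OF order.refl assms] card_vecs[where 'a='a, of n] unfolding q_def by simp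
  finally show ?thesis using P by simp
qed

lemma tau_diff:
  fixes \<tau> :: "nat \<Rightarrow> 'a \<Rightarrow> bool list" and H :: "nat \<Rightarrow> nat \<Rightarrow> 'a"
  assumes "rows_indep n m H" "z \<in> extensional {..<n}"
  shows "complex_of_real (tau_dist \<tau> n (code_of n m H) z - tau_dist \<tau> n (vecs n) z) =
    (\<Sum>\<beta>\<in>{\<beta>\<in>vecs m. \<exists>i<m. \<beta> i \<noteq> 0}. \<Prod>j<n. fourier p w (\<lambda>t. ind_pre (\<tau> j) (z j) t) (dual_word m H \<beta> j))"
proof -
  have V: "vecs m = insert (zv m) {\<beta>\<in>vecs m. \<exists>i<m. \<beta> i \<noteq> 0}"
    using zv_vecs[of m] vecs_eq_zv[of _ m] by auto
  have nz: "zv m \<notin> {\<beta>\<in>vecs m. \<exists>i<m. \<beta> i \<noteq> 0}" using vecs_eq_zv[of "zv m" m] zv_vecs[of m] by auto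
  show ?thesis
    unfolding of_real_diff tau_dist_code[OF assms] tau_dist_unif[OF assms(2)]
    by (subst V, subst sum.insert) (use nz in \<open>simp_all add: dw_zv\<close>)
qed


lemma nat_arith_aux: "(wt::nat) \<ge> d \<Longrightarrow> wt \<le> c \<Longrightarrow> c = n - ci \<Longrightarrow> ci \<le> n \<Longrightarrow> ci = n - d + 1 \<Longrightarrow> False"
  by linarith

lemma dw_diff:
  fixes H :: "nat \<Rightarrow> nat \<Rightarrow> 'a"
  shows "dual_word m H (\<lambda>i\<in>{..<m}. \<beta> i - \<beta>' i) j = dual_word m H \<beta> j - dual_word m H \<beta>' j"
  unfolding dual_word_def by (simp add: sum_subtractf left_diff_distrib)

lemma weight_le: "weight n v \<le> n"
  unfolding weight_def by (rule order.trans[OF card_mono[of "{..<n}"]]) auto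

lemma dw_inj:
  fixes H :: "nat \<Rightarrow> nat \<Rightarrow> 'a"
  assumes ri: "rows_indep n m H" and I: "I \<subseteq> {..<n}" "card I = n - dual_min_dist n m H + 1"
  shows "inj_on (\<lambda>\<beta>. restrict (dual_word m H \<beta>) I) (vecs m)"
proof (rule inj_onI)
  fix \<beta> \<beta>' :: "nat \<Rightarrow> 'a"
  assume b: "\<beta> \<in> vecs m" "\<beta>' \<in> vecs m" and eq: "restrict (dual_word m H \<beta>) I = restrict (dual_word m H \<beta>') I"
  define \<gamma> where "\<gamma> = (\<lambda>i\<in>{..<m}. \<beta> i - \<beta>' i)"
  have g: "\<gamma> \<in> vecs m" unfolding \<gamma>_def vecs_def by auto
  have dwg: "dual_word m H \<gamma> j = dual_word m H \<beta> j - dual_word m H \<beta>' j" for j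
    unfolding \<gamma>_def by (rule dw_diff)
  have vanI: "dual_word m H \<gamma> j = 0" if "j \<in> I" for j
    using fun_cong[OF eq, of j] that dwg[of j] by simp
  define d where "d = dual_min_dist n m H"
  have all0: "\<forall>j<n. dual_word m H \<gamma> j = 0"
  proof (rule ccontr)
    assume "\<not> ?thesis"
    then obtain j0 where j0: "j0 < n" "dual_word m H \<gamma> j0 \<noteq> 0" by auto
    have mem: "weight n (dual_word m H \<gamma>) \<in> {weight n (dual_word m H \<beta>) | \<beta>.
      \<beta> \<in> vecs m \<and> (\<exists>j<n. dual_word m H \<beta> j \<noteq> 0)}"
      apply (rule CollectI, rule exI[of _ \<gamma>]) using g j0 by auto
    have fin: "finite {weight n (dual_word m H \<beta>) | \<beta>.
      \<beta> \<in> vecs m \<and> (\<exists>j<n. dual_word m H \<beta> j \<noteq> 0)}"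
      by (rule finite_subset[of _ "{..n}"]) (auto simp: weight_le)
    have "d \<le> weight n (dual_word m H \<gamma>)" unfolding d_def dual_min_dist_def using Min_le[OF fin mem] .
    moreover have "weight n (dual_word m H \<gamma>) \<le> card ({..<n} - I)"
      unfolding weight_def using vanI by (intro card_mono) auto
    moreover have "card ({..<n} - I) = n - card I" using card_Diff_subset[OF finite_subset[OF I(1) finite_lessThan] I(1)] by simp
    moreover have "card I \<le> n" using card_mono[OF finite_lessThan I(1)] by simp
    ultimately show False using I(2)[folded d_def] by (rule nat_arith_aux)
  qed
  have "\<forall>i<m. \<gamma> i = 0"
  proof -
    have "\<forall>\<beta>\<in>vecs m. (\<forall>j<n. dual_word m H \<beta> j = 0) \<longrightarrow> (\<forall>i<m. \<beta> i = 0)"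
      using ri unfolding rows_indep_def .
    hence "(\<forall>j<n. dual_word m H \<gamma> j = 0) \<longrightarrow> (\<forall>i<m. \<gamma> i = 0)" using g by (rule bspec)
    thus ?thesis using all0 by (rule mp)
  qed
  hence "\<forall>i<m. \<beta> i = \<beta>' i" unfolding \<gamma>_def by simp
  show "\<beta> = \<beta>'"
  proof (rule ext)
    fix x show "\<beta> x = \<beta>' x"
    proof (cases "x < m")
      case True thus ?thesis using \<open>\<forall>i<m. \<beta> i = \<beta>' i\<close> by simp
    next
      case False
      have "\<beta> x = undefined" "\<beta>' x = undefined"
        using PiE_arb[OF b(1)[unfolded vecs_def], of x] PiE_arb[OF b(2)[unfolded vecs_def], of x] False by auto
      thus ?thesis by simp
    qed
  qed
qed

lemma sumsq_bound:
  fixes H :: "nat \<Rightarrow> nat \<Rightarrow> 'a" and F :: "nat \<Rightarrow> 'a \<Rightarrow> complex"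
  assumes inj: "inj_on (\<lambda>\<beta>. restrict (dual_word m H \<beta>) I) (vecs m)" and fI: "finite I" and B: "B \<subseteq> vecs m"
  shows "(\<Sum>\<beta>\<in>B. (\<Prod>j\<in>I. cmod (F j (dual_word m H \<beta> j)))^2) \<le> (\<Prod>j\<in>I. \<Sum>a\<in>UNIV. (cmod (F j a))^2)"
proof -
  define h where "h v = (\<Prod>j\<in>I. (cmod (F j (v j)))^2)" for v :: "nat \<Rightarrow> 'a"
  define r where "r \<beta> = restrict (dual_word m H \<beta>) I" for \<beta> :: "nat \<Rightarrow> 'a"
  have hnn: "h v \<ge> 0" for v unfolding h_def by (intro prod_nonneg) auto
  have "(\<Sum>\<beta>\<in>B. (\<Prod>j\<in>I. cmod (F j (dual_word m H \<beta> j)))^2) = (\<Sum>\<beta>\<in>B. h (r \<beta>))"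
    unfolding h_def r_def by (intro sum.cong refl) (simp add: prod_power_distrib)
  also have "\<dots> \<le> (\<Sum>\<beta>\<in>vecs m. h (r \<beta>))"
    using B hnn by (intro sum_mono2) auto
  also have "\<dots> = (\<Sum>v\<in>r ` vecs m. h v)"
    using inj unfolding r_def by (simp add: sum.reindex)
  also have "\<dots> \<le> (\<Sum>v\<in>PiE I (\<lambda>_. UNIV). h v)"
    using hnn fI by (intro sum_mono2) (auto simp: r_def intro!: finite_PiE)
  also have "\<dots> = (\<Prod>j\<in>I. \<Sum>a\<in>UNIV. (cmod (F j a))^2)"
    unfolding h_def by (rule prod_sum_PiE[symmetric]) (use fI in auto)
  finally show ?thesis .
qed

lemma parseval_ind:
  fixes t :: "'a \<Rightarrow> bool list"
  shows "(\<Sum>a\<in>UNIV. (cmod (fourier p w (ind_pre t l) a))^2) = real (card {x. t x = l}) / real CARD('a)"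
proof -
  have "(\<Sum>x\<in>UNIV. (cmod (ind_pre t l x))^2) = (\<Sum>x\<in>UNIV. if t x = l then 1 else 0)"
    unfolding ind_pre_def by (intro sum.cong) auto
  also have "\<dots> = real (card {x. t x = l})"
    by (simp add: sum.If_cases)
  finally show ?thesis using parseval[of "ind_pre t l"] by simp
qed

lemma sum_card_fibres:
  fixes t :: "'a \<Rightarrow> bool list"
  assumes "\<And>x. t x \<in> Bs" "finite Bs"
  shows "(\<Sum>s\<in>Bs. card {x. t x = s}) = CARD('a)"
proof -
  have "(\<Sum>s\<in>Bs. card {x. t x = s}) = card (\<Union>s\<in>Bs. {x. t x = s})"
    using assms(2) by (intro card_UN_disjoint[symmetric]) auto
  also have "(\<Union>s\<in>Bs. {x. t x = s}) = UNIV" using assms(1) by auto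
  finally show ?thesis .
qed

end

lemma sqrt_sum_bound:
  assumes "finite A" "\<And>s. s \<in> A \<Longrightarrow> f s \<ge> 0"
  shows "(\<Sum>s\<in>A. sqrt (f s)) \<le> sqrt (real (card A) * (\<Sum>s\<in>A. f s))"
proof (rule real_le_rsqrt)
  have "(\<Sum>s\<in>A. 1 * sqrt (f s))^2 \<le> (\<Sum>s\<in>A. 1^2) * (\<Sum>s\<in>A. (sqrt (f s))^2)"
    by (rule Cauchy_Schwarz_ineq_sum)
  also have "(\<Sum>s\<in>A. (sqrt (f s))^2) = (\<Sum>s\<in>A. f s)"
    using assms(2) by (intro sum.cong) auto
  finally show "(\<Sum>s\<in>A. sqrt (f s))^2 \<le> real (card A) * (\<Sum>s\<in>A. f s)" by simp
qed

lemma sqrt_prod: "(\<Prod>j\<in>A. sqrt (f j)) = sqrt (\<Prod>j\<in>A. f j)"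
  by (induction A rule: infinite_finite_induct) (simp_all add: real_sqrt_mult)

lemma bitstrings_eq: "bitstrings \<mu> = {xs. set xs \<subseteq> UNIV \<and> length xs = \<mu>}"
  unfolding bitstrings_def by simp

lemma finite_bits[simp]: "finite (bitstrings \<mu>)"
  unfolding bitstrings_eq by (rule finite_lists_length_eq) simp

lemma card_bits: "card (bitstrings \<mu>) = 2 ^ \<mu>"
proof -
  have "card {xs::bool list. set xs \<subseteq> UNIV \<and> length xs = \<mu>} = card (UNIV::bool set) ^ \<mu>"
    by (rule card_lists_length_eq) simp
  thus ?thesis unfolding bitstrings_eq by simp
qed

definition mrg :: "nat set \<Rightarrow> nat set \<Rightarrow> (nat \<Rightarrow> 'b) \<Rightarrow> (nat \<Rightarrow> 'b) \<Rightarrow> nat \<Rightarrow> 'b" where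
  "mrg A B x y = (\<lambda>i. if i \<in> A then x i else if i \<in> B then y i else undefined)"

lemma restrict_mrg_A: assumes "x \<in> PiE A S" shows "restrict (mrg A B x y) A = x"
proof (rule ext)
  fix i show "restrict (mrg A B x y) A i = x i"
    using PiE_arb[OF assms, of i] unfolding mrg_def by auto
qed

lemma restrict_mrg_B: assumes "A \<inter> B = {}" "y \<in> PiE B S" shows "restrict (mrg A B x y) B = y"
proof (rule ext)
  fix i show "restrict (mrg A B x y) B i = y i"
    using PiE_arb[OF assms(2), of i] assms(1) unfolding mrg_def by auto
qed

lemma mrg_restrict: assumes "z \<in> PiE (A \<union> B) S" shows "mrg A B (restrict z A) (restrict z B) = z"
proof (rule ext)
  fix i show "mrg A B (restrict z A) (restrict z B) i = z i"
    using PiE_arb[OF assms, of i] unfolding mrg_def by auto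
qed

lemma mrg_in: "x \<in> PiE A S \<Longrightarrow> y \<in> PiE B S \<Longrightarrow> mrg A B x y \<in> PiE (A \<union> B) S"
  unfolding mrg_def by (auto simp: PiE_iff extensional_def)

lemma sum_PiE_split:
  fixes f g :: "(nat \<Rightarrow> 'b) \<Rightarrow> real"
  assumes "A \<inter> B = {}"
  shows "(\<Sum>z\<in>PiE (A \<union> B) S. f (restrict z A) * g (restrict z B)) = (\<Sum>x\<in>PiE A S. f x) * (\<Sum>y\<in>PiE B S. g y)"
proof -
  have "(\<Sum>x\<in>PiE A S. f x) * (\<Sum>y\<in>PiE B S. g y) = (\<Sum>xy\<in>PiE A S \<times> PiE B S. f (fst xy) * g (snd xy))"
    by (simp add: sum_product sum.cartesian_product split_def)
  also have "\<dots> = (\<Sum>z\<in>PiE (A \<union> B) S. f (restrict z A) * g (restrict z B))"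
  proof (rule sum.reindex_bij_witness[of _ "\<lambda>z. (restrict z A, restrict z B)" "\<lambda>xy. mrg A B (fst xy) (snd xy)"])
    fix xy assume xy: "xy \<in> PiE A S \<times> PiE B S"
    have rA: "restrict (mrg A B (fst xy) (snd xy)) A = fst xy" using xy by (intro restrict_mrg_A) auto
    have rB: "restrict (mrg A B (fst xy) (snd xy)) B = snd xy" using xy by (intro restrict_mrg_B[OF assms]) auto
    show "(restrict (mrg A B (fst xy) (snd xy)) A, restrict (mrg A B (fst xy) (snd xy)) B) = xy"
      unfolding rA rB by simp
    show "mrg A B (fst xy) (snd xy) \<in> PiE (A \<union> B) S" using xy by (intro mrg_in) auto
    show "f (restrict (mrg A B (fst xy) (snd xy)) A) * g (restrict (mrg A B (fst xy) (snd xy)) B) = f (fst xy) * g (snd xy)"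
      unfolding rA rB ..
  next
    fix z assume z: "z \<in> PiE (A \<union> B) S"
    show "mrg A B (fst (restrict z A, restrict z B)) (snd (restrict z A, restrict z B)) = z"
      using mrg_restrict[OF z] by simp
    show "(restrict z A, restrict z B) \<in> PiE A S \<times> PiE B S" using z by auto
  qed
  finally show ?thesis ..
qed

lemma cs_sqrt:
  fixes f g :: "'b \<Rightarrow> real"
  shows "(\<Sum>i\<in>A. f i * g i) \<le> sqrt (\<Sum>i\<in>A. (f i)^2) * sqrt (\<Sum>i\<in>A. (g i)^2)"
proof -
  have "(\<Sum>i\<in>A. f i * g i)^2 \<le> (\<Sum>i\<in>A. (f i)^2) * (\<Sum>i\<in>A. (g i)^2)"
    by (rule Cauchy_Schwarz_ineq_sum)
  hence "(\<Sum>i\<in>A. f i * g i) \<le> sqrt ((\<Sum>i\<in>A. (f i)^2) * (\<Sum>i\<in>A. (g i)^2))"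
    by (rule real_le_rsqrt)
  thus ?thesis by (simp add: real_sqrt_mult)
qed

theorem lemma4p6:
  fixes p w \<mu> n k :: nat
    and H :: "nat \<Rightarrow> nat \<Rightarrow> 'a::{field,finite}"
    and \<tau> :: "nat \<Rightarrow> 'a \<Rightarrow> bool list"
    and I1 I2 I3 :: "nat set"
  assumes "prime p" and "w \<ge> 1" and "CARD('a) = p ^ w" and "\<mu> \<ge> 1"
    and "0 < k" and "k < n"
    and "rows_indep n (n - k) H"
    and "I1 \<union> I2 \<union> I3 = {..<n}" and "I1 \<inter> I2 = {}" and "I1 \<inter> I3 = {}" and "I2 \<inter> I3 = {}"
    and "card I1 = n - dual_min_dist n (n - k) H + 1"
    and "card I2 = n - dual_min_dist n (n - k) H + 1"
    and "\<And>j x. j < n \<Longrightarrow> length (\<tau> j x) = \<mu>"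
  shows "SD_tau \<tau> \<mu> n (code_of n (n - k) H) (vecs n) \<le>
    (1/2) * 2 ^ (\<mu> * (n - dual_min_dist n (n - k) H + 1)) *
    (\<Sum>ls\<in>PiE I3 (\<lambda>_. bitstrings \<mu>).
       Max ((\<lambda>\<beta>. \<Prod>j\<in>I3. cmod (fourier p w (ind_pre (\<tau> j) (ls j)) (dual_word (n - k) H \<beta> j)))
            ` {\<beta>\<in>vecs (n - k). \<exists>i<n - k. \<beta> i \<noteq> 0}))"
proof -
  interpret FF p w "TYPE('a)" using assms(1-3) by unfold_locales auto
  define m where "m = n - k"
  define d where "d = dual_min_dist n m H"
  define c where "c = n - d + 1"
  define Z where "Z = PiE {..<n} (\<lambda>_. bitstrings \<mu>)"
  define Bm where "Bm = {\<beta>\<in>vecs m. \<exists>i<m. \<beta> i \<noteq> (0::'a)}"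
  define Mx where "Mx ls = Max ((\<lambda>\<beta>. \<Prod>j\<in>I3. cmod (fourier p w (ind_pre (\<tau> j) (ls j)) (dual_word m H \<beta> j))) ` Bm)" for ls
  define q where "q = real CARD('a)"
  define u where "u j s = sqrt (real (card {x. \<tau> j x = s}) / q)" for j s
  define C where "C = code_of n m H"
  have ri: "rows_indep n m H" using assms(7) unfolding m_def .
  have m1: "m \<ge> 1" using assms(5,6) unfolding m_def by simp
  have Isub: "I1 \<subseteq> {..<n}" "I2 \<subseteq> {..<n}" "I3 \<subseteq> {..<n}" using assms(8) by auto
  have Ifin: "finite I1" "finite I2" "finite I3" using Isub finite_subset by blast+
  have cI: "card I1 = c" "card I2 = c" using assms(12,13) unfolding c_def d_def m_def by auto
  have inj1: "inj_on (\<lambda>\<beta>. restrict (dual_word m H \<beta>) I1) (vecs m)"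
    by (rule dw_inj[OF ri Isub(1)]) (use assms(12) in \<open>simp add: m_def\<close>)
  have inj2: "inj_on (\<lambda>\<beta>. restrict (dual_word m H \<beta>) I2) (vecs m)"
    by (rule dw_inj[OF ri Isub(2)]) (use assms(13) in \<open>simp add: m_def\<close>)
  have Bsub: "Bm \<subseteq> vecs m" unfolding Bm_def by auto
  have Bfin: "finite Bm" using Bsub finite_subset finite_vecs by blast
  have Bne: "(\<lambda>i\<in>{..<m}. 1::'a) \<in> Bm" unfolding Bm_def vecs_def using m1 by (auto intro!: exI[of _ 0])
  have Mx_ge: "(\<Prod>j\<in>I3. cmod (fourier p w (ind_pre (\<tau> j) (ls j)) (dual_word m H \<beta> j))) \<le> Mx ls"
    if "\<beta> \<in> Bm" for ls \<beta>
    unfolding Mx_def using Bfin that by (intro Max_ge) auto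
  have Mx_nn: "Mx ls \<ge> 0" for ls
    by (rule order.trans[OF _ Mx_ge[OF Bne]]) (auto intro: prod_nonneg)
  have q0: "q > 0" unfolding q_def by simp

  have stepA: "\<bar>tau_dist \<tau> n C z - tau_dist \<tau> n (vecs n) z\<bar> \<le>
      Mx (restrict z I3) * ((\<Prod>j\<in>I1. u j (z j)) * (\<Prod>j\<in>I2. u j (z j)))" if z: "z \<in> Z" for z
  proof -
    define a where "a j \<beta> = cmod (fourier p w (ind_pre (\<tau> j) (z j)) (dual_word m H \<beta> j))" for j \<beta>
    have ext: "z \<in> extensional {..<n}" using z unfolding Z_def by (simp add: PiE_iff)
    have "\<bar>tau_dist \<tau> n C z - tau_dist \<tau> n (vecs n) z\<bar> = cmod (complex_of_real (tau_dist \<tau> n C z - tau_dist \<tau> n (vecs n) z))"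
      by (rule norm_of_real[symmetric])
    also have "\<dots> = cmod (\<Sum>\<beta>\<in>Bm. \<Prod>j<n. fourier p w (ind_pre (\<tau> j) (z j)) (dual_word m H \<beta> j))"
      unfolding C_def tau_diff[OF ri ext] Bm_def ..
    also have "\<dots> \<le> (\<Sum>\<beta>\<in>Bm. \<Prod>j<n. a j \<beta>)"
      by (rule order.trans[OF norm_sum], rule sum_mono) (simp add: a_def prod_norm)
    also have "\<dots> = (\<Sum>\<beta>\<in>Bm. ((\<Prod>j\<in>I1. a j \<beta>) * (\<Prod>j\<in>I2. a j \<beta>)) * (\<Prod>j\<in>I3. a j \<beta>))"
    proof (rule sum.cong[OF refl])
      fix \<beta>
      have "(\<Prod>j<n. a j \<beta>) = (\<Prod>j\<in>I1 \<union> I2 \<union> I3. a j \<beta>)" using assms(8) by simp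
      also have "\<dots> = (\<Prod>j\<in>I1 \<union> I2. a j \<beta>) * (\<Prod>j\<in>I3. a j \<beta>)"
        by (rule prod.union_disjoint) (use Ifin assms(10,11) in auto)
      also have "(\<Prod>j\<in>I1 \<union> I2. a j \<beta>) = (\<Prod>j\<in>I1. a j \<beta>) * (\<Prod>j\<in>I2. a j \<beta>)"
        by (rule prod.union_disjoint) (use Ifin assms(9) in auto)
      finally show "(\<Prod>j<n. a j \<beta>) = ((\<Prod>j\<in>I1. a j \<beta>) * (\<Prod>j\<in>I2. a j \<beta>)) * (\<Prod>j\<in>I3. a j \<beta>)" .
    qed
    also have "\<dots> \<le> (\<Sum>\<beta>\<in>Bm. ((\<Prod>j\<in>I1. a j \<beta>) * (\<Prod>j\<in>I2. a j \<beta>)) * Mx (restrict z I3))"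
    proof (rule sum_mono)
      fix \<beta> assume b: "\<beta> \<in> Bm"
      have "(\<Prod>j\<in>I3. a j \<beta>) = (\<Prod>j\<in>I3. cmod (fourier p w (ind_pre (\<tau> j) (restrict z I3 j)) (dual_word m H \<beta> j)))"
        unfolding a_def by (rule prod.cong) auto
      also have "\<dots> \<le> Mx (restrict z I3)" by (rule Mx_ge[OF b])
      finally show "((\<Prod>j\<in>I1. a j \<beta>) * (\<Prod>j\<in>I2. a j \<beta>)) * (\<Prod>j\<in>I3. a j \<beta>) \<le> ((\<Prod>j\<in>I1. a j \<beta>) * (\<Prod>j\<in>I2. a j \<beta>)) * Mx (restrict z I3)"
        by (intro mult_left_mono) (auto simp: a_def intro!: mult_nonneg_nonneg prod_nonneg)
    qed
    also have "\<dots> = Mx (restrict z I3) * (\<Sum>\<beta>\<in>Bm. (\<Prod>j\<in>I1. a j \<beta>) * (\<Prod>j\<in>I2. a j \<beta>))"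
      by (simp add: sum_distrib_left mult.commute)
    also have "\<dots> \<le> Mx (restrict z I3) * (sqrt (\<Sum>\<beta>\<in>Bm. (\<Prod>j\<in>I1. a j \<beta>)^2) * sqrt (\<Sum>\<beta>\<in>Bm. (\<Prod>j\<in>I2. a j \<beta>)^2))"
      by (intro mult_left_mono cs_sqrt Mx_nn)
    also have "\<dots> \<le> Mx (restrict z I3) * (sqrt (\<Prod>j\<in>I1. \<Sum>t\<in>UNIV. (cmod (fourier p w (ind_pre (\<tau> j) (z j)) t))^2) *
                                         sqrt (\<Prod>j\<in>I2. \<Sum>t\<in>UNIV. (cmod (fourier p w (ind_pre (\<tau> j) (z j)) t))^2))"
      unfolding a_def
      by (intro mult_left_mono Mx_nn mult_mono real_sqrt_le_mono sumsq_bound[OF inj1 Ifin(1) Bsub]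
                sumsq_bound[OF inj2 Ifin(2) Bsub]) (auto intro!: prod_nonneg sum_nonneg)
    also have "(\<Prod>j\<in>I1. \<Sum>t\<in>UNIV. (cmod (fourier p w (ind_pre (\<tau> j) (z j)) t))^2) = (\<Prod>j\<in>I1. real (card {x. \<tau> j x = z j}) / q)"
      unfolding q_def by (simp add: parseval_ind)
    also have "(\<Prod>j\<in>I2. \<Sum>t\<in>UNIV. (cmod (fourier p w (ind_pre (\<tau> j) (z j)) t))^2) = (\<Prod>j\<in>I2. real (card {x. \<tau> j x = z j}) / q)"
      unfolding q_def by (simp add: parseval_ind)
    also have "sqrt (\<Prod>j\<in>I1. real (card {x. \<tau> j x = z j}) / q) = (\<Prod>j\<in>I1. u j (z j))"
      unfolding u_def by (simp add: sqrt_prod)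
    also have "sqrt (\<Prod>j\<in>I2. real (card {x. \<tau> j x = z j}) / q) = (\<Prod>j\<in>I2. u j (z j))"
      unfolding u_def by (simp add: sqrt_prod)
    finally show ?thesis .
  qed

  have stepD: "(\<Sum>x\<in>PiE I (\<lambda>_. bitstrings \<mu>). \<Prod>j\<in>I. u j (x j)) \<le> sqrt (2 ^ \<mu>) ^ card I"
    if I: "I \<subseteq> {..<n}" for I
  proof -
    have fI: "finite I" using I finite_subset by blast
    have "(\<Sum>x\<in>PiE I (\<lambda>_. bitstrings \<mu>). \<Prod>j\<in>I. u j (x j)) = (\<Prod>j\<in>I. \<Sum>s\<in>bitstrings \<mu>. u j s)"
      by (rule prod_sum_PiE[symmetric]) (use fI in auto)
    also have "\<dots> \<le> (\<Prod>j\<in>I. sqrt (2 ^ \<mu>))"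
    proof (rule prod_mono)
      fix j assume j: "j \<in> I"
      have jn: "j < n" using j I by auto
      have "(\<Sum>s\<in>bitstrings \<mu>. real (card {x. \<tau> j x = s}) / q) = real (\<Sum>s\<in>bitstrings \<mu>. card {x. \<tau> j x = s}) / q"
        by (simp add: sum_divide_distrib)
      also have "(\<Sum>s\<in>bitstrings \<mu>. card {x. \<tau> j x = s}) = CARD('a)"
      proof (rule sum_card_fibres)
        fix x show "\<tau> j x \<in> bitstrings \<mu>" using assms(14)[OF jn] by (simp add: bitstrings_def)
      qed (rule finite_bits)
      finally have s1: "(\<Sum>s\<in>bitstrings \<mu>. real (card {x. \<tau> j x = s}) / q) = 1"
        using q0 unfolding q_def by simp
      have "(\<Sum>s\<in>bitstrings \<mu>. u j s) \<le> sqrt (real (card (bitstrings \<mu>)) * (\<Sum>s\<in>bitstrings \<mu>. real (card {x. \<tau> j x = s}) / q))"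
        unfolding u_def by (rule sqrt_sum_bound) (use q0 in auto)
      also have "\<dots> = sqrt (2 ^ \<mu>)" unfolding s1 card_bits by simp
      finally show "0 \<le> (\<Sum>s\<in>bitstrings \<mu>. u j s) \<and> (\<Sum>s\<in>bitstrings \<mu>. u j s) \<le> sqrt (2 ^ \<mu>)"
        using q0 by (auto simp: u_def intro!: sum_nonneg)
    qed
    also have "\<dots> = sqrt (2 ^ \<mu>) ^ card I" by simp
    finally show ?thesis .
  qed

  have Zsplit: "Z = PiE ((I1 \<union> I2) \<union> I3) (\<lambda>_. bitstrings \<mu>)" unfolding Z_def using assms(8) by simp
  define P where "P I x = (\<Prod>j\<in>I. u j (x j))" for I x
  have Pr: "P I (restrict x I) = P I x" for I x unfolding P_def by (rule prod.cong) auto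
  have "SD_tau \<tau> \<mu> n C (vecs n) = (1/2) * (\<Sum>z\<in>Z. \<bar>tau_dist \<tau> n C z - tau_dist \<tau> n (vecs n) z\<bar>)"
    unfolding SD_tau_def Z_def ..
  also have "\<dots> \<le> (1/2) * (\<Sum>z\<in>Z. Mx (restrict z I3) * (P I1 z * P I2 z))"
    unfolding P_def by (intro mult_left_mono sum_mono stepA) auto
  also have "(\<Sum>z\<in>Z. Mx (restrict z I3) * (P I1 z * P I2 z)) =
      (\<Sum>z\<in>PiE ((I1 \<union> I2) \<union> I3) (\<lambda>_. bitstrings \<mu>).
         (\<lambda>x. P I1 (restrict x I1) * P I2 (restrict x I2)) (restrict z (I1 \<union> I2)) * Mx (restrict z I3))"
    unfolding Zsplit by (intro sum.cong refl) (simp add: Pr mult.commute)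
  also have "\<dots> = (\<Sum>x\<in>PiE (I1 \<union> I2) (\<lambda>_. bitstrings \<mu>). P I1 (restrict x I1) * P I2 (restrict x I2)) *
                  (\<Sum>ls\<in>PiE I3 (\<lambda>_. bitstrings \<mu>). Mx ls)"
    by (rule sum_PiE_split) (use assms(10,11) in auto)
  also have "(\<Sum>x\<in>PiE (I1 \<union> I2) (\<lambda>_. bitstrings \<mu>). P I1 (restrict x I1) * P I2 (restrict x I2)) =
      (\<Sum>x\<in>PiE I1 (\<lambda>_. bitstrings \<mu>). P I1 x) * (\<Sum>y\<in>PiE I2 (\<lambda>_. bitstrings \<mu>). P I2 y)"
    by (rule sum_PiE_split) (use assms(9) in auto)
  also have "(1/2) * ((\<Sum>x\<in>PiE I1 (\<lambda>_. bitstrings \<mu>). P I1 x) * (\<Sum>y\<in>PiE I2 (\<lambda>_. bitstrings \<mu>). P I2 y) *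
                  (\<Sum>ls\<in>PiE I3 (\<lambda>_. bitstrings \<mu>). Mx ls))
      \<le> (1/2) * (sqrt (2 ^ \<mu>) ^ c * sqrt (2 ^ \<mu>) ^ c * (\<Sum>ls\<in>PiE I3 (\<lambda>_. bitstrings \<mu>). Mx ls))"
    unfolding P_def
    by (intro mult_left_mono mult_right_mono mult_mono sum_nonneg Mx_nn prod_nonneg)
       (use stepD[OF Isub(1)] stepD[OF Isub(2)] cI q0 in \<open>auto simp: u_def\<close>)
  also have "sqrt (2 ^ \<mu>) ^ c * sqrt (2 ^ \<mu>) ^ c = (2::real) ^ (\<mu> * c)"
    by (simp add: power_mult_distrib[symmetric] power_mult)
  finally have "SD_tau \<tau> \<mu> n C (vecs n) \<le> (1/2) * (2 ^ (\<mu> * c) * (\<Sum>ls\<in>PiE I3 (\<lambda>_. bitstrings \<mu>). Mx ls))" .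
  thus ?thesis unfolding C_def Mx_def Bm_def c_def d_def m_def by (simp add: mult.assoc)
qed


end
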